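(* Consider the stochastic $K$-armed bandit with losses supported in $[0,1]$, and run the Regularized-EXP3 algorithm described in the context with mirror map $\phi_\alpha$, $\alpha\in[0,1]$, and parameters $\eta=1/\sqrt T$, $\varepsilon=\log T/\sqrt T$, $\lambda=\gamma_T/\sqrt{KT}$, where $(\gamma_T)$ is a positive sequence with $\gamma_T\le(\log T)^2$ and $\gamma_T/(\log T)^2\to0$, and, if $\alpha\in[0,\tfrac13)$, additionally $\log T/\gamma_T\to0$. Then the regret $\mathcal R(T)=\mathbb E[\sum_{t=1}^T\ell_t]-T\mu^\star$, with $\mu^\star=\min_j\mu_j$, satisfies $$\mathcal R(T)\le\begin{cases}\left(4\sqrt K\log T+\gamma_T\log T\right)\sqrt{KT}, & \alpha\in[0,\tfrac13),\\[2pt] \left(4\sqrt K\log K+2\sqrt K\log T+\gamma_T\log T\right)\sqrt{KT}, & \alpha\in[\tfrac13,1].\end{cases}$$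
   Context: Stochastic $K$-armed bandit (loss formulation): arm $a\in[K]$ has loss distribution $\mathcal P_a$ supported in $[0,1]$ with mean $\mu_a$; $\mu=(\mu_1,\dots,\mu_K)$. At round $t$ the learner chooses $A_t$ and observes $\ell_t\sim\mathcal P_{A_t}$ (independently of the past given $A_t$). $\Delta_\varepsilon=\{x\in\mathbb R^K: x_j\ge\varepsilon\ \forall j,\ \sum_jx_j=1\}$; $R_\varepsilon(x)=-\sum_i\ln x_i+\frac1\varepsilon\sum_ix_i$. Mirror maps on $\mathbb R^K_{>0}$: $\phi_\alpha(x)=-\sum_i\frac{x_i^\alpha-\alpha x_i-(1-\alpha)}{\alpha(1-\alpha)}$ for $0<\alpha<1$, $\phi_0(x)=-\sum_i(\log x_i-x_i+1)$, $\phi_1(x)=\sum_i(x_i\log x_i-x_i+1)$. $D_\phi(x,y)=\phi(x)-\phi(y)-\langle\nabla\phi(y),x-y\rangle$. Regularized-EXP3 (parameters $T,\eta,\lambda,\varepsilon$, mirror map $\phi$): $z_1=(1/K,\dots,1/K)$; for $t=1,\dots,T$: $x_t=\arg\min_{x\in\Delta_\varepsilon}D_\phi(x,z_t)$; draw $A_t$ with $\mathbb P(A_t=j\mid\text{past})=x_{t,j}$, observe $\ell_t$; $\widehat\ell_{t,j}=\mathbb I\{A_t=j\}\ell_t/x_{t,j}$; $\widetilde\ell_t=\widehat\ell_t+\lambda\nabla R_\varepsilon(x_t)$; $z_{t+1}=\arg\min_x\{\eta\langle\widetilde\ell_t,x\rangle+D_\phi(x,x_t)\}$. *)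

theory Defs
  imports "HOL-Probability.Probability"
begin

text \<open>Arms are the elements of a finite type 'k, so K = CARD('k);
  vectors in R^K are functions 'k \<Rightarrow> real.\<close>

definition inner_k :: "('k::finite \<Rightarrow> real) \<Rightarrow> ('k \<Rightarrow> real) \<Rightarrow> real" where
  "inner_k u v = (\<Sum>i\<in>UNIV. u i * v i)"

definition simplex_eps :: "real \<Rightarrow> ('k::finite \<Rightarrow> real) set" where
  "simplex_eps \<epsilon> = {x. (\<forall>j. x j \<ge> \<epsilon>) \<and> (\<Sum>j\<in>UNIV. x j) = 1}"

definition pos_orthant :: "('k::finite \<Rightarrow> real) set" where
  "pos_orthant = {x. \<forall>i. x i > 0}"

definition phi :: "real \<Rightarrow> ('k::finite \<Rightarrow> real) \<Rightarrow> real" where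
  "phi \<alpha> x =
     (if \<alpha> = 0 then - (\<Sum>i\<in>UNIV. ln (x i) - x i + 1)
      else if \<alpha> = 1 then (\<Sum>i\<in>UNIV. x i * ln (x i) - x i + 1)
      else - (\<Sum>i\<in>UNIV. (x i powr \<alpha> - \<alpha> * x i - (1 - \<alpha>)) / (\<alpha> * (1 - \<alpha>))))"

definition grad_phi :: "real \<Rightarrow> ('k::finite \<Rightarrow> real) \<Rightarrow> 'k \<Rightarrow> real" where
  "grad_phi \<alpha> x i =
     (if \<alpha> = 0 then - (1 / x i - 1)
      else if \<alpha> = 1 then ln (x i)
      else - (\<alpha> * x i powr (\<alpha> - 1) - \<alpha>) / (\<alpha> * (1 - \<alpha>)))"

definition bregman :: "real \<Rightarrow> ('k::finite \<Rightarrow> real) \<Rightarrow> ('k \<Rightarrow> real) \<Rightarrow> real" where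
  "bregman \<alpha> x y = phi \<alpha> x - phi \<alpha> y - inner_k (grad_phi \<alpha> y) (\<lambda>i. x i - y i)"

text \<open>Gradient of R_eps(x) = - sum ln x_i + (1/eps) sum x_i.\<close>
definition grad_R :: "real \<Rightarrow> ('k::finite \<Rightarrow> real) \<Rightarrow> 'k \<Rightarrow> real" where
  "grad_R \<epsilon> x i = - 1 / x i + 1 / \<epsilon>"

definition proj :: "real \<Rightarrow> real \<Rightarrow> ('k::finite \<Rightarrow> real) \<Rightarrow> ('k \<Rightarrow> real)" where
  "proj \<alpha> \<epsilon> z = (SOME x. x \<in> simplex_eps \<epsilon> \<and>
       (\<forall>y\<in>simplex_eps \<epsilon>. bregman \<alpha> x z \<le> bregman \<alpha> y z))"

definition reg_loss :: "real \<Rightarrow> real \<Rightarrow> real \<Rightarrow> ('k::finite \<Rightarrow> real) \<Rightarrow> 'k \<Rightarrow> real \<Rightarrow> ('k \<Rightarrow> real)" where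
  "reg_loss \<alpha> lam \<epsilon> z j l =
     (let x = proj \<alpha> \<epsilon> z in
      (\<lambda>i. (if i = j then l / x j else 0) + lam * grad_R \<epsilon> x i))"

definition next_state :: "real \<Rightarrow> real \<Rightarrow> real \<Rightarrow> real \<Rightarrow> ('k::finite \<Rightarrow> real) \<Rightarrow> 'k \<Rightarrow> real \<Rightarrow> ('k \<Rightarrow> real)" where
  "next_state \<alpha> \<eta> lam \<epsilon> z j l =
     (let x = proj \<alpha> \<epsilon> z; lt = reg_loss \<alpha> lam \<epsilon> z j l in
      SOME z'. z' \<in> pos_orthant \<and>
        (\<forall>y\<in>pos_orthant. \<eta> * inner_k lt z' + bregman \<alpha> z' x \<le> \<eta> * inner_k lt y + bregman \<alpha> y x))"

text \<open>Expected cumulative loss of n remaining rounds of Regularized-EXP3 started in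
  state z (z = z_t), when arm j has loss distribution P j:
  E[sum of losses] computed by conditioning on A_t (chosen w.p. x_{t,j}) and
  l_t ~ P_{A_t}.\<close>
fun exp_loss :: "('k::finite \<Rightarrow> real measure) \<Rightarrow> real \<Rightarrow> real \<Rightarrow> real \<Rightarrow> real \<Rightarrow> nat
                 \<Rightarrow> ('k \<Rightarrow> real) \<Rightarrow> ennreal" where
  "exp_loss P \<alpha> \<eta> lam \<epsilon> 0 z = 0"
| "exp_loss P \<alpha> \<eta> lam \<epsilon> (Suc n) z =
     (\<Sum>j\<in>UNIV. ennreal (proj \<alpha> \<epsilon> z j) *
        (\<integral>\<^sup>+ l. ennreal l + exp_loss P \<alpha> \<eta> lam \<epsilon> n (next_state \<alpha> \<eta> lam \<epsilon> z j l) \<partial>P j))"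

definition exp3_expected_loss ::
  "('k::finite \<Rightarrow> real measure) \<Rightarrow> real \<Rightarrow> nat \<Rightarrow> real \<Rightarrow> real \<Rightarrow> real \<Rightarrow> ennreal" where
  "exp3_expected_loss P \<alpha> T \<eta> lam \<epsilon> =
     exp_loss P \<alpha> \<eta> lam \<epsilon> T (\<lambda>_. 1 / real CARD('k))"

end

theory Submission
  imports Defs "HOL-Real_Asymp.Real_Asymp"
begin


definition ph :: "real \<Rightarrow> real \<Rightarrow> real" where
  "ph \<alpha> t = (if \<alpha> = 0 then - (ln t - t + 1) else if \<alpha> = 1 then t * ln t - t + 1
     else - ((t powr \<alpha> - \<alpha> * t - (1 - \<alpha>)) / (\<alpha> * (1 - \<alpha>))))"

definition dph :: "real \<Rightarrow> real \<Rightarrow> real" where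
  "dph \<alpha> t = (if \<alpha> = 0 then - (1 / t - 1)
      else if \<alpha> = 1 then ln t
      else - (\<alpha> * t powr (\<alpha> - 1) - \<alpha>) / (\<alpha> * (1 - \<alpha>)))"

definition bd :: "real \<Rightarrow> real \<Rightarrow> real \<Rightarrow> real" where
  "bd \<alpha> s t = ph \<alpha> s - ph \<alpha> t - dph \<alpha> t * (s - t)"

lemma phi_sum: "phi \<alpha> x = (\<Sum>i\<in>UNIV. ph \<alpha> (x i))"
  unfolding phi_def ph_def by (simp add: sum_negf[symmetric] sum_subtractf sum.distrib sum_divide_distrib)

lemma grad_phi_eq: "grad_phi \<alpha> x i = dph \<alpha> (x i)"
  unfolding grad_phi_def dph_def by simp

lemma bregman_sum: "bregman \<alpha> x y = (\<Sum>i\<in>UNIV. bd \<alpha> (x i) (y i))"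
  unfolding bregman_def bd_def inner_k_def phi_sum grad_phi_eq
  by (simp add: sum_subtractf)

lemma bd_0: "0 < s \<Longrightarrow> 0 < t \<Longrightarrow> bd 0 s t = s/t - 1 - ln (s/t)"
  unfolding bd_def ph_def dph_def by (simp add: ln_div field_simps)

lemma bd_1: "0 < s \<Longrightarrow> 0 < t \<Longrightarrow> bd 1 s t = t * ((s/t) * ln (s/t) - s/t + 1)"
  unfolding bd_def ph_def dph_def by (simp add: ln_div field_simps)

lemma bd_mid_aux: "(D::real) \<noteq> 0 \<Longrightarrow> - (A / D) - - (B / D) - (- C / D) * (s - t) = (B - A + C * (s - t)) / D"
  by (simp add: field_simps)

lemma gen3: "(a::real)/D - b/D - c*(s-t)/D = (a - b - c*(s-t))/D"
  by (simp add: diff_divide_distrib)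

lemma bd_mid: "0 < s \<Longrightarrow> 0 < t \<Longrightarrow> 0 < \<alpha> \<Longrightarrow> \<alpha> < 1 \<Longrightarrow>
   bd \<alpha> s t = t powr \<alpha> * (1 - (s/t) powr \<alpha> + \<alpha> * (s/t - 1)) / (\<alpha> * (1 - \<alpha>))"
proof -
  assume a: "0 < s" "0 < t" "0 < \<alpha>" "\<alpha> < 1"
  have D: "\<alpha> * (1 - \<alpha>) \<noteq> 0" using a by simp
  have e1: "(s/t) powr \<alpha> = s powr \<alpha> / t powr \<alpha>" using a by (simp add: powr_divide)
  have e2: "t powr (\<alpha> - 1) = t powr \<alpha> / t" using a by (simp add: powr_diff)
  have "bd \<alpha> s t = ((t powr \<alpha> - \<alpha> * t - (1 - \<alpha>)) - (s powr \<alpha> - \<alpha> * s - (1 - \<alpha>))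
        + (\<alpha> * t powr (\<alpha> - 1) - \<alpha>) * (s - t)) / (\<alpha> * (1 - \<alpha>))"
    using a unfolding bd_def ph_def dph_def
    apply (simp add: minus_divide_left)
    apply (subst gen3)
    apply (rule arg_cong[where f="\<lambda>x. x / (\<alpha> * (1 - \<alpha>))"])
    by (simp add: algebra_simps)
  also have "\<dots> = t powr \<alpha> * (1 - (s/t) powr \<alpha> + \<alpha> * (s/t - 1)) / (\<alpha> * (1 - \<alpha>))"
    unfolding e1 e2 using a by (simp add: field_simps)
  finally show ?thesis .
qed



lemma cont_from_deriv:
  fixes f :: "real \<Rightarrow> real"
  assumes "\<And>x. a \<le> x \<Longrightarrow> x \<le> b \<Longrightarrow> \<exists>y. DERIV f x :> y"
  shows "continuous_on {a..b} f"
  using assms DERIV_atLeastAtMost_imp_continuous_on by blast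

lemma gm_deriv: "0 < (x::real) \<Longrightarrow> DERIV (\<lambda>r. 1 - r powr \<alpha> + \<alpha> * (r - 1)) x :> (\<alpha> - \<alpha> * x powr (\<alpha> - 1))"
  by (auto intro!: derivative_eq_intros)

lemma gm_pos:
  fixes \<alpha> r :: real
  assumes a: "0 < \<alpha>" "\<alpha> < 1" and r: "0 < r" "r \<noteq> 1"
  shows "1 - r powr \<alpha> + \<alpha> * (r - 1) > 0"
proof (cases "r < 1")
  case True
  let ?f = "\<lambda>r. 1 - r powr \<alpha> + \<alpha> * (r - 1)"
  have "?f 1 < ?f r"
  proof (rule DERIV_neg_imp_decreasing_open[OF True])
    fix x assume x: "r < x" "x < 1"
    have "1 < x powr (\<alpha> - 1)" using powr_less_mono2_neg[of "\<alpha> - 1" x 1] a x r by simp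
    then show "\<exists>y. DERIV ?f x :> y \<and> y < 0"
      using gm_deriv[of x \<alpha>] x r a by (intro exI[of _ "\<alpha> - \<alpha> * x powr (\<alpha> - 1)"]) auto
  next
    show "continuous_on {r..1} ?f"
    proof (rule cont_from_deriv)
      fix x assume "r \<le> x" "x \<le> 1"
      then have "0 < x" using r by simp
      then show "\<exists>y. DERIV ?f x :> y" using gm_deriv by blast
    qed
  qed
  then show ?thesis by simp
next
  case False
  then have r1: "1 < r" using r by simp
  let ?f = "\<lambda>r. 1 - r powr \<alpha> + \<alpha> * (r - 1)"
  have "?f 1 < ?f r"
  proof (rule DERIV_pos_imp_increasing_open[OF r1])
    fix x assume x: "1 < x" "x < r"
    have "x powr (\<alpha> - 1) < 1" using powr_less_one[of x "\<alpha> - 1"] a x by simp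
    then show "\<exists>y. DERIV ?f x :> y \<and> y > 0"
      using gm_deriv[of x \<alpha>] x r a by (intro exI[of _ "\<alpha> - \<alpha> * x powr (\<alpha> - 1)"]) auto
  next
    show "continuous_on {1..r} ?f"
    proof (rule cont_from_deriv)
      fix x assume "1 \<le> x" "x \<le> r"
      then have "0 < x" by simp
      then show "\<exists>y. DERIV ?f x :> y" using gm_deriv by blast
    qed
  qed
  then show ?thesis by simp
qed

lemma gm_quad:
  fixes \<alpha> r :: real
  assumes a: "0 < \<alpha>" "\<alpha> < 1" and r: "0 < r" "r \<le> 1"
  shows "1 - r powr \<alpha> + \<alpha> * (r - 1) \<ge> \<alpha> * (1 - \<alpha>) * (1 - r)\<^sup>2 / 2"
proof -
  let ?f = "\<lambda>r. 1 - r powr \<alpha> + \<alpha> * (r - 1) - \<alpha> * (1 - \<alpha>) * (1 - r)\<^sup>2 / 2"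
  have "?f r \<ge> ?f 1"
  proof (rule DERIV_nonpos_imp_nonincreasing[OF r(2)])
    fix x assume x: "r \<le> x" "x \<le> 1"
    then have x0: "0 < x" using r by simp
    have d: "DERIV ?f x :> (\<alpha> - \<alpha> * x powr (\<alpha> - 1) + \<alpha> * (1 - \<alpha>) * (1 - x))"
      using x0 by (auto intro!: derivative_eq_intros has_real_derivative_powr simp: power2_eq_square field_simps)
    have "x powr (\<alpha> - 1) = exp ((\<alpha> - 1) * ln x)" using x0 by (simp add: powr_def)
    also have "\<dots> \<ge> 1 + (\<alpha> - 1) * ln x" by (rule exp_ge_add_one_self)
    finally have "x powr (\<alpha> - 1) \<ge> 1 + (\<alpha> - 1) * ln x" .
    then have e1: "x powr (\<alpha> - 1) \<ge> 1 + (1 - \<alpha>) * (- ln x)" by (simp add: algebra_simps)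
    have "- ln x \<ge> 1 - x" using ln_le_minus_one[OF x0] by simp
    then have "(1 - \<alpha>) * (- ln x) \<ge> (1 - \<alpha>) * (1 - x)" using a by (intro mult_left_mono) auto
    with e1 have "x powr (\<alpha> - 1) \<ge> 1 + (1 - \<alpha>) * (1 - x)" by simp
    then have "\<alpha> * (1 + (1 - \<alpha>) * (1 - x)) \<le> \<alpha> * x powr (\<alpha> - 1)" using a by (intro mult_left_mono) auto
    then have "\<alpha> - \<alpha> * x powr (\<alpha> - 1) + \<alpha> * (1 - \<alpha>) * (1 - x) \<le> 0" by (simp add: algebra_simps)
    with d show "\<exists>y. DERIV ?f x :> y \<and> y \<le> 0" by blast
  qed
  then show ?thesis by simp
qed

lemma g0_quad:
  fixes r :: real
  assumes r: "0 < r" "r \<le> 1"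
  shows "r - 1 - ln r \<ge> (1 - r)\<^sup>2 / 2"
proof -
  let ?f = "\<lambda>r. r - 1 - ln r - (1 - r)\<^sup>2 / 2"
  have "?f r \<ge> ?f 1"
  proof (rule DERIV_nonpos_imp_nonincreasing[OF r(2)])
    fix x assume x: "r \<le> x" "x \<le> 1"
    then have x0: "0 < x" using r by simp
    have d: "DERIV ?f x :> (1 - 1 / x + (1 - x))"
      using x0 by (auto intro!: derivative_eq_intros has_real_derivative_powr simp: power2_eq_square field_simps)
    have "1 - 1 / x + (1 - x) = (1 - x) * (x - 1) / x" using x0 by (simp add: field_simps)
    also have "\<dots> \<le> 0" using x x0 by (intro divide_nonpos_pos) (auto simp: mult_nonneg_nonpos)
    finally show "\<exists>y. DERIV ?f x :> y \<and> y \<le> 0" using d by blast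
  qed
  then show ?thesis by simp
qed

lemma g1_quad:
  fixes r :: real
  assumes r: "0 < r" "r \<le> 1"
  shows "r * ln r - r + 1 \<ge> (1 - r)\<^sup>2 / 2"
proof -
  let ?f = "\<lambda>r. r * ln r - r + 1 - (1 - r)\<^sup>2 / 2"
  have "?f r \<ge> ?f 1"
  proof (rule DERIV_nonpos_imp_nonincreasing[OF r(2)])
    fix x assume x: "r \<le> x" "x \<le> 1"
    then have x0: "0 < x" using r by simp
    have d: "DERIV ?f x :> (ln x + 1 - x)"
      using x0 by (auto intro!: derivative_eq_intros has_real_derivative_powr simp: power2_eq_square field_simps)
    have "ln x + 1 - x \<le> 0" using ln_le_minus_one[OF x0] by simp
    then show "\<exists>y. DERIV ?f x :> y \<and> y \<le> 0" using d by blast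
  qed
  then show ?thesis by simp
qed

lemma g0_pos: "0 < r \<Longrightarrow> r \<noteq> 1 \<Longrightarrow> r - 1 - ln r > (0::real)"
  using ln_le_minus_one[of r] ln_eq_minus_one[of r] by force

lemma g1_pos: "0 < r \<Longrightarrow> r \<noteq> 1 \<Longrightarrow> r * ln r - r + 1 > (0::real)"
proof -
  assume r: "0 < r" "r \<noteq> 1"
  then have "1/r - 1 - ln (1/r) > 0" using g0_pos[of "1/r"] by simp
  then have "r * (1/r - 1 - ln (1/r)) > 0" using r by simp
  then show ?thesis using r by (simp add: ln_div algebra_simps)
qed



lemma bd_pos:
  assumes a: "0 \<le> \<alpha>" "\<alpha> \<le> 1" and st: "0 < s" "0 < t" "s \<noteq> t"
  shows "bd \<alpha> s t > 0"
proof -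
  have r: "0 < s/t" "s/t \<noteq> 1" using st by auto
  consider "\<alpha> = 0" | "\<alpha> = 1" | "0 < \<alpha> \<and> \<alpha> < 1" using a by linarith
  then show ?thesis
  proof cases
    case 1 then show ?thesis using bd_0[OF st(1,2)] g0_pos[OF r] by simp
  next
    case 2 then show ?thesis using bd_1[OF st(1,2)] g1_pos[OF r] st by simp
  next
    case 3
    then have "1 - (s/t) powr \<alpha> + \<alpha> * (s/t - 1) > 0" using gm_pos[OF _ _ r] by auto
    then show ?thesis using bd_mid[OF st(1,2)] 3 st by (simp add: divide_pos_pos)
  qed
qed

lemma bd_nonneg:
  assumes a: "0 \<le> \<alpha>" "\<alpha> \<le> 1" and st: "0 < s" "0 < t"
  shows "bd \<alpha> s t \<ge> 0"
  using bd_pos[OF a st] by (cases "s = t") (auto simp: bd_def)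

lemma bd_quad:
  assumes a: "0 \<le> \<alpha>" "\<alpha> \<le> 1" and st: "0 < s" "s \<le> t" "t \<le> 1"
  shows "bd \<alpha> s t \<ge> (t - s)\<^sup>2 / (2 * t)"
proof -
  have t0: "0 < t" using st by simp
  have r: "0 < s/t" "s/t \<le> 1" using st by auto
  have eq: "(t - s)\<^sup>2 / (2 * t) = t * ((1 - s/t)\<^sup>2 / 2)" using t0
    by (simp add: field_simps power2_eq_square)
  have q0: "(1 - s/t)\<^sup>2 / 2 \<ge> 0" by simp
  consider "\<alpha> = 0" | "\<alpha> = 1" | "0 < \<alpha> \<and> \<alpha> < 1" using a by linarith
  then show ?thesis
  proof cases
    case 1
    have "t * ((1 - s/t)\<^sup>2 / 2) \<le> 1 * ((1 - s/t)\<^sup>2 / 2)" using st q0 by (intro mult_right_mono) auto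
    then have "(t - s)\<^sup>2 / (2 * t) \<le> (1 - s/t)\<^sup>2 / 2" using eq by simp
    also have "\<dots> \<le> s/t - 1 - ln (s/t)" using g0_quad[OF r] .
    finally show ?thesis using bd_0[OF st(1) t0] 1 by simp
  next
    case 2
    have "(t - s)\<^sup>2 / (2 * t) = t * ((1 - s/t)\<^sup>2 / 2)" by (rule eq)
    also have "\<dots> \<le> t * ((s/t) * ln (s/t) - s/t + 1)" using g1_quad[OF r] t0
      by (intro mult_left_mono) auto
    finally have "(t - s)\<^sup>2 / (2 * t) \<le> t * ((s/t) * ln (s/t) - s/t + 1)" .
    then show ?thesis using bd_1[OF st(1) t0] 2 by simp
  next
    case 3
    then have c: "0 < \<alpha> * (1 - \<alpha>)" by simp
    have g: "1 - (s/t) powr \<alpha> + \<alpha> * (s/t - 1) \<ge> \<alpha> * (1 - \<alpha>) * (1 - s/t)\<^sup>2 / 2"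
      using gm_quad[OF _ _ r] 3 by auto
    have tp: "t \<le> t powr \<alpha>" using powr_mono'[of \<alpha> 1 t] 3 st by simp
    have "(t - s)\<^sup>2 / (2 * t) = t * ((1 - s/t)\<^sup>2 / 2)" by (rule eq)
    also have "t * ((1 - s/t)\<^sup>2 / 2) \<le> t powr \<alpha> * ((1 - s/t)\<^sup>2 / 2)"
      using tp q0 by (intro mult_right_mono) auto
    also have "\<dots> \<le> t powr \<alpha> * ((1 - (s/t) powr \<alpha> + \<alpha> * (s/t - 1)) / (\<alpha> * (1 - \<alpha>)))"
      using g c by (intro mult_left_mono) (auto simp: pos_le_divide_eq mult.commute mult.left_commute)
    also have "\<dots> = bd \<alpha> s t" using bd_mid[OF st(1) t0] 3 by simp
    finally show ?thesis .
  qed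
qed

lemma stab:
  assumes a: "0 \<le> \<alpha>" "\<alpha> \<le> 1" and x: "0 < x" "x \<le> 1" and y: "0 < y" and c: "0 \<le> c"
  shows "c * (x - y) - bd \<alpha> y x \<le> c\<^sup>2 * x / 2"
proof (cases "y \<le> x")
  case True
  have "bd \<alpha> y x \<ge> (x - y)\<^sup>2 / (2 * x)" using bd_quad[OF a y True x(2)] .
  moreover have "c * (x - y) - (x - y)\<^sup>2 / (2 * x) \<le> c\<^sup>2 * x / 2"
  proof -
    have "0 \<le> (c * x - (x - y))\<^sup>2 / (2 * x)" using x by simp
    also have "(c * x - (x - y))\<^sup>2 / (2 * x) = c\<^sup>2 * x / 2 - (c * (x - y) - (x - y)\<^sup>2 / (2 * x))"
      using x by (simp add: field_simps power2_eq_square)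
    finally show ?thesis by simp
  qed
  ultimately show ?thesis by simp
next
  case False
  then have "c * (x - y) \<le> 0" using c by (simp add: mult_nonneg_nonpos)
  moreover have "bd \<alpha> y x \<ge> 0" using bd_nonneg[OF a y x(1)] .
  moreover have "c\<^sup>2 * x / 2 \<ge> 0" using x by simp
  ultimately show ?thesis by linarith
qed

lemma dph_inv:
  assumes a: "0 \<le> \<alpha>" "\<alpha> \<le> 1" and t: "0 < t" and c: "0 \<le> c"
  shows "\<exists>w>0. dph \<alpha> w = dph \<alpha> t - c"
proof -
  consider "\<alpha> = 0" | "\<alpha> = 1" | "0 < \<alpha> \<and> \<alpha> < 1" using a by linarith
  then show ?thesis
  proof cases
    case 1
    have p: "0 < 1 / t + c" using t c by (simp add: add_pos_nonneg)
    show ?thesis using 1 p by (intro exI[of _ "1 / (1/t + c)"]) (simp add: dph_def)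
  next
    case 2
    show ?thesis using 2 t by (intro exI[of _ "t * exp (- c)"]) (simp add: dph_def ln_mult)
  next
    case 3
    define q where "q = t powr (\<alpha> - 1) + (1 - \<alpha>) * c"
    have q: "0 < q" unfolding q_def using 3 t c by (simp add: add_pos_nonneg)
    define w where "w = q powr (1 / (\<alpha> - 1))"
    have w: "0 < w" unfolding w_def using q by simp
    have ww: "w powr (\<alpha> - 1) = q" unfolding w_def using q 3 by (simp add: powr_powr)
    have D: "\<alpha> * (1 - \<alpha>) \<noteq> 0" using 3 by simp
    have "dph \<alpha> w = - (\<alpha> * q - \<alpha>) / (\<alpha> * (1 - \<alpha>))" using 3 ww by (simp add: dph_def)
    also have "\<dots> = dph \<alpha> t - c" using 3 D unfolding dph_def q_def
      by (simp add: field_simps)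
    finally show ?thesis using w by blast
  qed
qed

lemma dph_cont: "0 < t \<Longrightarrow> isCont (dph \<alpha>) t"
  apply (cases "\<alpha> = 0"; cases "\<alpha> = 1")
  by (simp_all add: dph_def[abs_def]) (auto intro!: continuous_intros)

lemma ph_cont: "0 < t \<Longrightarrow> isCont (ph \<alpha>) t"
  apply (cases "\<alpha> = 0"; cases "\<alpha> = 1")
  by (simp_all add: ph_def[abs_def]) (auto intro!: continuous_intros)



lemma simplex_pos: "x \<in> simplex_eps \<epsilon> \<Longrightarrow> 0 < \<epsilon> \<Longrightarrow> 0 < x i"
  unfolding simplex_eps_def by (auto intro: less_le_trans)

lemma simplex_le1:
  fixes x :: "'k::finite \<Rightarrow> real"
  assumes "x \<in> simplex_eps \<epsilon>" "0 < \<epsilon>" shows "x i \<le> 1"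
proof -
  have "x i \<le> (\<Sum>j\<in>UNIV. x j)"
    by (rule member_le_sum) (use assms simplex_pos[OF assms] in \<open>auto intro: less_imp_le\<close>)
  then show ?thesis using assms unfolding simplex_eps_def by simp
qed

lemma simplex_unif:
  assumes "0 < \<epsilon>" "real CARD('k::finite) * \<epsilon> \<le> 1"
  shows "(\<lambda>_. 1 / real CARD('k)) \<in> (simplex_eps \<epsilon> :: ('k \<Rightarrow> real) set)"
  using assms unfolding simplex_eps_def by (auto simp: field_simps)

lemma proj_exists:
  fixes z :: "'k::finite \<Rightarrow> real"
  assumes e: "0 < \<epsilon>" "real CARD('k) * \<epsilon> \<le> 1"
  shows "\<exists>x. x \<in> simplex_eps \<epsilon> \<and> (\<forall>y\<in>simplex_eps \<epsilon>. bregman \<alpha> x z \<le> bregman \<alpha> y z)"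
proof -
  define S where "S = {v :: real^'k. (\<forall>j. \<epsilon> \<le> v$j) \<and> (\<Sum>j\<in>UNIV. v$j) = 1}"
  have memS: "v \<in> S \<longleftrightarrow> (\<lambda>j. v$j) \<in> simplex_eps \<epsilon>" for v
    unfolding S_def simplex_eps_def by simp
  have closed: "closed S" unfolding S_def
    by (intro closed_Collect_conj closed_Collect_all closed_Collect_le closed_Collect_eq)
       (auto intro!: continuous_intros)
  have "S \<subseteq> cbox (vec 0) (vec 1)"
  proof
    fix v assume v: "v \<in> S"
    then have "(\<lambda>j. v$j) \<in> simplex_eps \<epsilon>" using memS by blast
    then show "v \<in> cbox (vec 0) (vec 1)"
      using simplex_pos[of "\<lambda>j. v$j" \<epsilon>] simplex_le1[of "\<lambda>j. v$j" \<epsilon>] e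
      by (auto simp: mem_box_cart intro: less_imp_le)
  qed
  then have bounded: "bounded S" using bounded_cbox bounded_subset by blast
  have compact: "compact S" using closed bounded compact_eq_bounded_closed by blast
  have ne: "S \<noteq> {}"
  proof -
    have "(\<chi> j. 1 / real CARD('k)) \<in> S" using memS simplex_unif[OF e] by simp
    then show ?thesis by blast
  qed
  have pc: "continuous_on {0<..} (ph \<alpha>)"
    by (rule continuous_at_imp_continuous_on) (auto intro: ph_cont)
  have cont: "continuous_on S (\<lambda>v. bregman \<alpha> (\<lambda>i. v$i) z)"
    unfolding bregman_sum bd_def
  proof (intro continuous_on_sum continuous_on_diff continuous_on_mult continuous_on_const)
    fix i
    show "continuous_on S (\<lambda>v. ph \<alpha> (v $ i))"
    proof (rule continuous_on_compose2[OF pc])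
      show "continuous_on S (\<lambda>v. v $ i)" by (auto intro!: continuous_intros)
      show "(\<lambda>v. v $ i) ` S \<subseteq> {0<..}" using memS simplex_pos e by fastforce
    qed
    show "continuous_on S (\<lambda>v. v $ i)" by (auto intro!: continuous_intros)
  qed
  obtain v0 where v0: "v0 \<in> S" "\<forall>w\<in>S. bregman \<alpha> (\<lambda>i. v0$i) z \<le> bregman \<alpha> (\<lambda>i. w$i) z"
    using continuous_attains_inf[OF compact ne cont] by blast
  show ?thesis
  proof (intro exI conjI ballI)
    show "(\<lambda>i. v0$i) \<in> simplex_eps \<epsilon>" using v0 memS by blast
    fix y :: "'k \<Rightarrow> real" assume y: "y \<in> simplex_eps \<epsilon>"
    have "vec_lambda y \<in> S" using memS y by simp
    then show "bregman \<alpha> (\<lambda>i. v0$i) z \<le> bregman \<alpha> y z" using v0(2) by force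
  qed
qed

lemma proj_spec:
  fixes z :: "'k::finite \<Rightarrow> real"
  assumes e: "0 < \<epsilon>" "real CARD('k) * \<epsilon> \<le> 1"
  shows "proj \<alpha> \<epsilon> z \<in> simplex_eps \<epsilon>"
    "\<And>y. y \<in> simplex_eps \<epsilon> \<Longrightarrow> bregman \<alpha> (proj \<alpha> \<epsilon> z) z \<le> bregman \<alpha> y z"
  using someI_ex[OF proj_exists[OF e, of \<alpha> z]] unfolding proj_def by blast+



lemma bd_three: "dph \<alpha> w = dph \<alpha> x - c \<Longrightarrow>
   c * y + bd \<alpha> y x - (c * w + bd \<alpha> w x) = bd \<alpha> y w"
proof -
  assume "dph \<alpha> w = dph \<alpha> x - c"
  then have h: "dph \<alpha> x = dph \<alpha> w + c" by simp
  show ?thesis unfolding bd_def h by (simp add: algebra_simps)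
qed

lemma next_state_spec:
  fixes z :: "'k::finite \<Rightarrow> real" and j :: 'k
  assumes a: "0 \<le> \<alpha>" "\<alpha> \<le> 1" and e: "0 < \<epsilon>" "real CARD('k) * \<epsilon> \<le> 1"
    and eta: "0 < \<eta>" and lam: "0 \<le> lam" and l: "0 \<le> l"
  defines "x \<equiv> proj \<alpha> \<epsilon> z"
  defines "lt \<equiv> reg_loss \<alpha> lam \<epsilon> z j l"
  shows "next_state \<alpha> \<eta> lam \<epsilon> z j l \<in> pos_orthant"
    "\<And>i. dph \<alpha> (next_state \<alpha> \<eta> lam \<epsilon> z j l i) = dph \<alpha> (x i) - \<eta> * lt i"
    "\<And>i. 0 \<le> lt i"
proof -
  have xs: "x \<in> simplex_eps \<epsilon>" unfolding x_def using proj_spec[OF e] by blast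
  have xp: "0 < x i" for i using simplex_pos[OF xs e(1)] .
  have xe: "\<epsilon> \<le> x i" for i using xs unfolding simplex_eps_def by blast
  have ltnn: "0 \<le> lt i" for i
  proof -
    have "1 / x i \<le> 1 / \<epsilon>" using xe e by (intro divide_left_mono) (auto intro: mult_pos_pos xp)
    then have "0 \<le> lam * grad_R \<epsilon> x i" using lam unfolding grad_R_def by simp
    moreover have "0 \<le> (if i = j then l / x j else 0)" using l xp[of j] by simp
    ultimately show ?thesis unfolding lt_def reg_loss_def Let_def x_def[symmetric] by simp
  qed
  then show "\<And>i. 0 \<le> lt i" .
  have "\<forall>i. \<exists>w>0. dph \<alpha> w = dph \<alpha> (x i) - \<eta> * lt i"
    using dph_inv[OF a xp] ltnn eta by simp
  then obtain w where w: "\<And>i. 0 < w i" "\<And>i. dph \<alpha> (w i) = dph \<alpha> (x i) - \<eta> * lt i"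
    by metis
  define Q where "Q = (\<lambda>z'. z' \<in> pos_orthant \<and>
        (\<forall>y\<in>pos_orthant. \<eta> * inner_k lt z' + bregman \<alpha> z' x \<le> \<eta> * inner_k lt y + bregman \<alpha> y x))"
  have key: "(\<eta> * inner_k lt y + bregman \<alpha> y x) - (\<eta> * inner_k lt w + bregman \<alpha> w x) = bregman \<alpha> y w" for y
  proof -
    have "(\<eta> * inner_k lt y + bregman \<alpha> y x) - (\<eta> * inner_k lt w + bregman \<alpha> w x)
        = (\<Sum>i\<in>UNIV. (\<eta> * lt i) * y i + bd \<alpha> (y i) (x i) - ((\<eta> * lt i) * w i + bd \<alpha> (w i) (x i)))"
      unfolding inner_k_def bregman_sum by (simp add: sum.distrib sum_subtractf sum_distrib_left algebra_simps)
    also have "\<dots> = bregman \<alpha> y w" unfolding bregman_sum using bd_three[OF w(2)] by simp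
    finally show ?thesis .
  qed
  have wpos: "w \<in> pos_orthant" unfolding pos_orthant_def using w by simp
  have Qw: "Q w" unfolding Q_def
  proof (intro conjI ballI wpos)
    fix y :: "'k \<Rightarrow> real" assume "y \<in> pos_orthant"
    then have "bregman \<alpha> y w \<ge> 0" unfolding bregman_sum pos_orthant_def
      using bd_nonneg[OF a] w by (auto intro: sum_nonneg)
    then show "\<eta> * inner_k lt w + bregman \<alpha> w x \<le> \<eta> * inner_k lt y + bregman \<alpha> y x"
      using key[of y] by simp
  qed
  have uniq: "z' = w" if "Q z'" for z'
  proof -
    have zp: "0 < z' i" for i using that unfolding Q_def pos_orthant_def by blast
    have "bregman \<alpha> z' w \<le> 0" using that wpos key[of z'] unfolding Q_def by auto
    then have s0: "(\<Sum>i\<in>UNIV. bd \<alpha> (z' i) (w i)) \<le> 0" unfolding bregman_sum .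
    have nn: "\<And>i. i \<in> UNIV \<Longrightarrow> 0 \<le> bd \<alpha> (z' i) (w i)" using bd_nonneg[OF a zp w(1)] by blast
    then have "(\<Sum>i\<in>UNIV. bd \<alpha> (z' i) (w i)) \<ge> 0" by (rule sum_nonneg)
    then have "(\<Sum>i\<in>UNIV. bd \<alpha> (z' i) (w i)) = 0" using s0 by linarith
    then have "\<forall>i\<in>UNIV. bd \<alpha> (z' i) (w i) = 0" using sum_nonneg_eq_0_iff[of UNIV "\<lambda>i. bd \<alpha> (z' i) (w i)", OF _ nn] by simp
    then show "z' = w" using bd_pos[OF a zp w(1)] by (auto intro!: ext) (metis less_irrefl)
  qed
  have ns: "next_state \<alpha> \<eta> lam \<epsilon> z j l = w"
    unfolding next_state_def Let_def x_def[symmetric] lt_def[symmetric] Q_def[symmetric]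
    using Qw uniq by (rule some_equality)
  show "next_state \<alpha> \<eta> lam \<epsilon> z j l \<in> pos_orthant" using ns wpos by simp
  show "\<And>i. dph \<alpha> (next_state \<alpha> \<eta> lam \<epsilon> z j l i) = dph \<alpha> (x i) - \<eta> * lt i" using ns w by simp
qed



lemma bd_pyth_id: "bd \<alpha> u z - bd \<alpha> u x - bd \<alpha> x z = (dph \<alpha> x - dph \<alpha> z) * (u - x)"
  unfolding bd_def by (simp add: algebra_simps)

lemma bd_line_id: "bd \<alpha> (x + t * v) z - bd \<alpha> x z + bd \<alpha> x (x + t * v)
     = t * ((dph \<alpha> (x + t * v) - dph \<alpha> z) * v)"
  unfolding bd_def by (simp add: algebra_simps)

lemma pyth:
  fixes z u :: "'k::finite \<Rightarrow> real"
  assumes a: "0 \<le> \<alpha>" "\<alpha> \<le> 1" and e: "0 < \<epsilon>" "real CARD('k) * \<epsilon> \<le> 1"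
    and u: "u \<in> simplex_eps \<epsilon>" and zp: "\<And>i. 0 < z i"
  shows "bregman \<alpha> u (proj \<alpha> \<epsilon> z) \<le> bregman \<alpha> u z"
proof -
  define x where "x = proj \<alpha> \<epsilon> z"
  have xs: "x \<in> simplex_eps \<epsilon>" unfolding x_def using proj_spec[OF e] by blast
  have xmin: "\<And>y. y \<in> simplex_eps \<epsilon> \<Longrightarrow> bregman \<alpha> x z \<le> bregman \<alpha> y z"
    unfolding x_def using proj_spec[OF e] by blast
  have xp: "0 < x i" for i using simplex_pos[OF xs e(1)] .
  have up: "0 < u i" for i using simplex_pos[OF u e(1)] .
  define v where "v i = u i - x i" for i
  define xt where "xt t i = x i + t * v i" for t i
  define G where "G t = (\<Sum>i\<in>UNIV. (dph \<alpha> (xt t i) - dph \<alpha> (z i)) * v i)" for t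
  have xt_s: "xt t \<in> simplex_eps \<epsilon>" if t: "0 \<le> t" "t \<le> 1" for t
  proof -
    have "\<epsilon> \<le> xt t i" for i
    proof -
      have "xt t i = (1 - t) * x i + t * u i" unfolding xt_def v_def by (simp add: algebra_simps)
      moreover have "(1 - t) * \<epsilon> \<le> (1 - t) * x i" using xs t unfolding simplex_eps_def
        by (intro mult_left_mono) auto
      moreover have "t * \<epsilon> \<le> t * u i" using u t unfolding simplex_eps_def
        by (intro mult_left_mono) auto
      ultimately show ?thesis by (simp add: algebra_simps)
    qed
    moreover have "(\<Sum>i\<in>UNIV. xt t i) = 1"
      using xs u unfolding xt_def v_def simplex_eps_def
      by (simp add: sum.distrib sum_subtractf sum_distrib_left[symmetric])
    ultimately show ?thesis unfolding simplex_eps_def by blast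
  qed
  have Gnn: "0 \<le> G t" if t: "0 < t" "t \<le> 1" for t
  proof -
    have s: "xt t \<in> simplex_eps \<epsilon>" using xt_s t by simp
    have xtp: "0 < xt t i" for i using simplex_pos[OF s e(1)] .
    have "t * G t = (bregman \<alpha> (xt t) z - bregman \<alpha> x z) + bregman \<alpha> x (xt t)"
      unfolding G_def bregman_sum sum_distrib_left xt_def
      by (simp add: sum_subtractf[symmetric] sum.distrib[symmetric] bd_line_id)
    moreover have "bregman \<alpha> x z \<le> bregman \<alpha> (xt t) z" using xmin[OF s] .
    moreover have "0 \<le> bregman \<alpha> x (xt t)" unfolding bregman_sum
      using bd_nonneg[OF a xp xtp] by (auto intro: sum_nonneg)
    ultimately have "0 \<le> t * G t" by simp
    then show ?thesis using t by (simp add: zero_le_mult_iff)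
  qed
  have cont: "isCont G 0"
  proof -
    have "isCont (\<lambda>t. dph \<alpha> (xt t i)) 0" for i
      unfolding xt_def
      by (rule isCont_o2[where g="dph \<alpha>"]) (auto intro!: continuous_intros dph_cont xp)
    then show ?thesis unfolding G_def by (auto intro!: continuous_intros)
  qed
  have lim: "(G \<longlongrightarrow> G 0) (at_right 0)"
    using isContD[OF cont] filterlim_at_split by blast
  have ev: "eventually (\<lambda>t. 0 \<le> G t) (at_right 0)"
    using eventually_at_right_real[of "0::real" 1] by (rule eventually_mono) (auto intro: Gnn)
  have G0: "0 \<le> G 0" using tendsto_lowerbound[OF lim ev] by simp
  have "bregman \<alpha> u z - bregman \<alpha> u x - bregman \<alpha> x z = G 0"
    unfolding bregman_sum G_def xt_def v_def
    by (simp add: sum_subtractf[symmetric] bd_pyth_id)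
  moreover have "0 \<le> bregman \<alpha> x z" unfolding bregman_sum
    using bd_nonneg[OF a xp zp] by (auto intro: sum_nonneg)
  ultimately show ?thesis unfolding x_def[symmetric] using G0 by linarith
qed



lemma bd_step_id: "dph \<alpha> w = dph \<alpha> x - c \<Longrightarrow>
   bd \<alpha> u w = bd \<alpha> u x - c * (x - u) + (c * (x - w) - bd \<alpha> w x)"
proof -
  assume "dph \<alpha> w = dph \<alpha> x - c"
  then have h: "dph \<alpha> x = dph \<alpha> w + c" by simp
  show ?thesis unfolding bd_def h by (simp add: algebra_simps)
qed

lemma sq_sum_le: "(a + b)\<^sup>2 \<le> 2 * a\<^sup>2 + 2 * (b::real)\<^sup>2"
proof -
  have "0 \<le> (a - b)\<^sup>2" by simp
  then show ?thesis by (simp add: power2_eq_square algebra_simps)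
qed

lemma step_ineq:
  fixes z u :: "'k::finite \<Rightarrow> real" and j :: 'k
  assumes a: "0 \<le> \<alpha>" "\<alpha> \<le> 1" and e: "0 < \<epsilon>" "real CARD('k) * \<epsilon> \<le> 1"
    and eta: "0 < \<eta>" and lam: "0 \<le> lam" and u: "u \<in> simplex_eps \<epsilon>"
    and zp: "\<And>i. 0 < z i" and l: "0 \<le> l" "l \<le> 1"
  defines "x \<equiv> proj \<alpha> \<epsilon> z"
  defines "z' \<equiv> next_state \<alpha> \<eta> lam \<epsilon> z j l"
  shows "z' \<in> pos_orthant"
    "l + bregman \<alpha> u (proj \<alpha> \<epsilon> z') / \<eta> \<le> bregman \<alpha> u x / \<eta> + (u j + \<eta>) * l / x j
       + lam * real CARD('k) + \<eta> * real CARD('k) * lam\<^sup>2 / \<epsilon>\<^sup>2"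
proof -
  define K where "K = real CARD('k)"
  define lt where "lt = reg_loss \<alpha> lam \<epsilon> z j l"
  define g where "g i = 1 / \<epsilon> - 1 / x i" for i
  have xs: "x \<in> simplex_eps \<epsilon>" unfolding x_def using proj_spec[OF e] by blast
  have xp: "0 < x i" for i using simplex_pos[OF xs e(1)] .
  have x1: "x i \<le> 1" for i using simplex_le1[OF xs e(1)] .
  have xe: "\<epsilon> \<le> x i" for i using xs unfolding simplex_eps_def by blast
  have up: "0 < u i" for i using simplex_pos[OF u e(1)] .
  have ue: "\<epsilon> \<le> u i" for i using u unfolding simplex_eps_def by blast
  have lt_eq: "lt i = (if i = j then l / x j else 0) + lam * g i" for i
    unfolding lt_def reg_loss_def Let_def x_def[symmetric] grad_R_def g_def by simp
  have g0: "0 \<le> g i" for i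
  proof -
    have "1 / x i \<le> 1 / \<epsilon>" using xe e by (intro divide_left_mono) (auto intro: mult_pos_pos xp)
    then show ?thesis unfolding g_def by simp
  qed
  have g1: "g i \<le> 1 / \<epsilon>" for i unfolding g_def using xp[of i] by simp
  note ns = next_state_spec[OF a e eta lam l(1), of z j, folded x_def lt_def z'_def]
  show zpos: "z' \<in> pos_orthant" using ns(1) .
  have z'p: "0 < z' i" for i using zpos unfolding pos_orthant_def by blast
  have ltn: "0 \<le> lt i" for i using ns(3) .
  have coord: "bd \<alpha> (u i) (z' i) \<le> bd \<alpha> (u i) (x i) - \<eta> * lt i * (x i - u i) + (\<eta> * lt i)\<^sup>2 * x i / 2" for i
  proof -
    have "bd \<alpha> (u i) (z' i) = bd \<alpha> (u i) (x i) - (\<eta> * lt i) * (x i - u i)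
        + ((\<eta> * lt i) * (x i - z' i) - bd \<alpha> (z' i) (x i))"
      by (rule bd_step_id) (rule ns(2))
    moreover have "(\<eta> * lt i) * (x i - z' i) - bd \<alpha> (z' i) (x i) \<le> (\<eta> * lt i)\<^sup>2 * x i / 2"
      by (rule stab[OF a xp x1 z'p]) (use eta ltn in simp)
    ultimately show ?thesis by simp
  qed
  have sumD: "bregman \<alpha> u z' \<le> bregman \<alpha> u x - \<eta> * (\<Sum>i\<in>UNIV. lt i * (x i - u i))
      + \<eta>\<^sup>2 / 2 * (\<Sum>i\<in>UNIV. (lt i)\<^sup>2 * x i)"
  proof -
    have "bregman \<alpha> u z' \<le> (\<Sum>i\<in>UNIV. bd \<alpha> (u i) (x i) - \<eta> * lt i * (x i - u i) + (\<eta> * lt i)\<^sup>2 * x i / 2)"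
      unfolding bregman_sum by (rule sum_mono) (rule coord)
    also have "\<dots> = bregman \<alpha> u x - \<eta> * (\<Sum>i\<in>UNIV. lt i * (x i - u i))
      + \<eta>\<^sup>2 / 2 * (\<Sum>i\<in>UNIV. (lt i)\<^sup>2 * x i)"
      unfolding bregman_sum
      by (simp add: sum.distrib sum_subtractf sum_distrib_left power_mult_distrib mult.assoc
          mult.commute mult.left_commute sum_divide_distrib)
    finally show ?thesis .
  qed
  have A: "(\<Sum>i\<in>UNIV. lt i * (x i - u i)) \<ge> l - u j * l / x j - lam * K"
  proof -
    have s1: "(\<Sum>i\<in>UNIV. (if i = j then l / x j else 0) * (x i - u i)) = l - u j * l / x j"
    proof -
      have "(\<Sum>i\<in>UNIV. (if i = j then l / x j else 0) * (x i - u i))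
          = (\<Sum>i\<in>UNIV. if i = j then l / x j * (x j - u j) else 0)"
        by (rule sum.cong) auto
      also have "\<dots> = l / x j * (x j - u j)" by simp
      also have "\<dots> = l - u j * l / x j" using xp[of j] by (simp add: field_simps)
      finally show ?thesis .
    qed
    have "(\<Sum>i\<in>UNIV. g i * (x i - u i)) \<ge> (\<Sum>i\<in>UNIV. (x i - u i) / \<epsilon> - 1)"
    proof (rule sum_mono)
      fix i
      have "g i * (x i - u i) = (x i - u i) / \<epsilon> - 1 + u i / x i"
        unfolding g_def using xp[of i] e by (simp add: field_simps)
      moreover have "0 \<le> u i / x i" using up[of i] xp[of i] by simp
      ultimately show "(x i - u i) / \<epsilon> - 1 \<le> g i * (x i - u i)" by simp
    qed
    moreover have "(\<Sum>i\<in>UNIV. (x i - u i) / \<epsilon> - 1) = - K"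
      using xs u unfolding simplex_eps_def K_def
      by (simp add: sum_subtractf sum_divide_distrib[symmetric])
    ultimately have s2: "(\<Sum>i\<in>UNIV. g i * (x i - u i)) \<ge> - K" by simp
    have "(\<Sum>i\<in>UNIV. lt i * (x i - u i)) = (l - u j * l / x j) + lam * (\<Sum>i\<in>UNIV. g i * (x i - u i))"
    proof -
      have "(\<Sum>i\<in>UNIV. lt i * (x i - u i)) = (\<Sum>i\<in>UNIV. (if i = j then l / x j else 0) * (x i - u i)
             + lam * (g i * (x i - u i)))"
        by (rule sum.cong) (simp_all add: lt_eq distrib_right mult.assoc)
      also have "\<dots> = (l - u j * l / x j) + lam * (\<Sum>i\<in>UNIV. g i * (x i - u i))"
        by (simp only: sum.distrib sum_distrib_left[symmetric] s1)
      finally show ?thesis .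
    qed
    moreover have "lam * (\<Sum>i\<in>UNIV. g i * (x i - u i)) \<ge> lam * (- K)"
      using s2 lam by (rule mult_left_mono)
    ultimately show ?thesis by simp
  qed
  have B: "(\<Sum>i\<in>UNIV. (lt i)\<^sup>2 * x i) \<le> 2 * (l / x j) + 2 * (K * (lam\<^sup>2 / \<epsilon>\<^sup>2))"
  proof -
    have "(\<Sum>i\<in>UNIV. (lt i)\<^sup>2 * x i) \<le> (\<Sum>i\<in>UNIV. 2 * ((if i = j then l / x j else 0)\<^sup>2 * x i) + 2 * (lam\<^sup>2 / \<epsilon>\<^sup>2))"
    proof (rule sum_mono)
      fix i
      define p where "p = (if i = j then l / x j else 0)"
      have "(lt i)\<^sup>2 \<le> 2 * p\<^sup>2 + 2 * (lam * g i)\<^sup>2"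
        unfolding lt_eq p_def[symmetric] by (rule sq_sum_le)
      then have "(lt i)\<^sup>2 * x i \<le> (2 * p\<^sup>2 + 2 * (lam * g i)\<^sup>2) * x i"
        using xp[of i] by (intro mult_right_mono) auto
      also have "\<dots> = 2 * (p\<^sup>2 * x i) + 2 * ((lam * g i)\<^sup>2 * x i)" by (simp add: algebra_simps)
      also have "(lam * g i)\<^sup>2 * x i \<le> (lam * g i)\<^sup>2 * 1" using x1[of i] by (intro mult_left_mono) auto
      also have "(lam * g i)\<^sup>2 * 1 \<le> (lam * (1/\<epsilon>))\<^sup>2"
      proof -
        have "lam * g i \<le> lam * (1/\<epsilon>)" using g1[of i] lam by (rule mult_left_mono)
        then have "(lam * g i)\<^sup>2 \<le> (lam * (1/\<epsilon>))\<^sup>2" by (rule power_mono) (use g0[of i] lam in simp)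
        then show ?thesis by simp
      qed
      finally show "(lt i)\<^sup>2 * x i \<le> 2 * (p\<^sup>2 * x i) + 2 * (lam\<^sup>2 / \<epsilon>\<^sup>2)"
        by (simp add: power_divide power_mult_distrib)
    qed
    also have "\<dots> = 2 * ((l / x j)\<^sup>2 * x j) + 2 * (K * (lam\<^sup>2 / \<epsilon>\<^sup>2))"
    proof -
      have h1: "(\<Sum>i\<in>UNIV. (if i = j then l / x j else 0)\<^sup>2 * x i) = (l / x j)\<^sup>2 * x j"
      proof -
        have "(\<Sum>i\<in>UNIV. (if i = j then l / x j else 0)\<^sup>2 * x i)
            = (\<Sum>i\<in>UNIV. if i = j then (l / x j)\<^sup>2 * x j else 0)"
          by (rule sum.cong) auto
        then show ?thesis by simp
      qed
      have h2: "(\<Sum>i\<in>(UNIV::'k set). lam\<^sup>2 / \<epsilon>\<^sup>2) = K * (lam\<^sup>2 / \<epsilon>\<^sup>2)"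
        by (simp add: K_def)
      show ?thesis
        by (simp only: sum.distrib sum_distrib_left[symmetric] h1 h2)
    qed
    also have "(l / x j)\<^sup>2 * x j \<le> l / x j"
    proof -
      have "(l / x j)\<^sup>2 * x j = l * l / x j" using xp[of j] by (simp add: power2_eq_square field_simps)
      also have "\<dots> \<le> l / x j" using l xp[of j] by (intro divide_right_mono) (auto simp: mult_le_cancel_right1 mult_left_le)
      finally show ?thesis .
    qed
    finally show ?thesis by simp
  qed
  have pyth': "bregman \<alpha> u (proj \<alpha> \<epsilon> z') \<le> bregman \<alpha> u z'" using pyth[OF a e u z'p] .
  have "bregman \<alpha> u (proj \<alpha> \<epsilon> z') \<le> bregman \<alpha> u x - \<eta> * (l - u j * l / x j - lam * K)
        + \<eta>\<^sup>2 / 2 * (2 * (l / x j) + 2 * (K * (lam\<^sup>2 / \<epsilon>\<^sup>2)))"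
  proof -
    have "\<eta> * (l - u j * l / x j - lam * K) \<le> \<eta> * (\<Sum>i\<in>UNIV. lt i * (x i - u i))"
      using A eta by (intro mult_left_mono) auto
    moreover have "\<eta>\<^sup>2 / 2 * (\<Sum>i\<in>UNIV. (lt i)\<^sup>2 * x i) \<le> \<eta>\<^sup>2 / 2 * (2 * (l / x j) + 2 * (K * (lam\<^sup>2 / \<epsilon>\<^sup>2)))"
      using B by (intro mult_left_mono) auto
    ultimately show ?thesis using pyth' sumD by linarith
  qed
  then have "bregman \<alpha> u (proj \<alpha> \<epsilon> z') / \<eta> \<le> (bregman \<alpha> u x - \<eta> * (l - u j * l / x j - lam * K)
        + \<eta>\<^sup>2 / 2 * (2 * (l / x j) + 2 * (K * (lam\<^sup>2 / \<epsilon>\<^sup>2)))) / \<eta>"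
    using eta by (simp add: divide_right_mono)
  also have "\<dots> = bregman \<alpha> u x / \<eta> - l + (u j + \<eta>) * l / x j + lam * K + \<eta> * K * lam\<^sup>2 / \<epsilon>\<^sup>2"
    using eta xp[of j] by (simp add: field_simps power2_eq_square)
  finally show "l + bregman \<alpha> u (proj \<alpha> \<epsilon> z') / \<eta> \<le> bregman \<alpha> u x / \<eta> + (u j + \<eta>) * l / x j
       + lam * real CARD('k) + \<eta> * real CARD('k) * lam\<^sup>2 / \<epsilon>\<^sup>2" unfolding K_def by simp
qed



lemma loss_facts:
  fixes M :: "real measure"
  assumes Mp: "prob_space M" and Mb: "sets M = sets borel" and Ms: "AE l in M. l \<in> {0..1}"
  shows "integrable M (\<lambda>l. l)" "0 \<le> (\<integral>l. l \<partial>M)" "(\<integral>l. l \<partial>M) \<le> 1"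
    "\<And>A B. 0 \<le> A \<Longrightarrow> 0 \<le> B \<Longrightarrow> (\<integral>\<^sup>+ l. ennreal (A + B * l) \<partial>M) = ennreal (A + B * (\<integral>l. l \<partial>M))"
proof -
  interpret prob_space M by (rule Mp)
  have meas: "(\<lambda>l. l) \<in> borel_measurable M" by (rule measurable_ident_sets[OF Mb])
  show int: "integrable M (\<lambda>l. l)"
    by (rule integrable_const_bound[where B=1]) (use Ms meas in auto)
  show "0 \<le> (\<integral>l. l \<partial>M)" by (rule integral_nonneg_AE) (use Ms in auto)
  have "(\<integral>l. l \<partial>M) \<le> (\<integral>l. 1 \<partial>M)"
    by (rule integral_mono_AE) (use int Ms in auto)
  then show "(\<integral>l. l \<partial>M) \<le> 1" by (simp add: prob_space)
  fix A B :: real assume AB: "0 \<le> A" "0 \<le> B"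
  have int2: "integrable M (\<lambda>l. A + B * l)" using int by auto
  have "(\<integral>\<^sup>+ l. ennreal (A + B * l) \<partial>M) = ennreal (\<integral>l. A + B * l \<partial>M)"
    by (rule nn_integral_eq_integral[OF int2]) (use Ms AB in auto)
  also have "(\<integral>l. A + B * l \<partial>M) = A + B * (\<integral>l. l \<partial>M)"
    using int by (simp add: prob_space)
  finally show "(\<integral>\<^sup>+ l. ennreal (A + B * l) \<partial>M) = ennreal (A + B * (\<integral>l. l \<partial>M))" .
qed

lemma exp_loss_bound:
  fixes P :: "'k::finite \<Rightarrow> real measure" and u :: "'k \<Rightarrow> real"
  assumes P_prob: "\<And>a. prob_space (P a)"
    and P_borel: "\<And>a. sets (P a) = sets borel"
    and P_support: "\<And>a. AE l in P a. l \<in> {0..1}"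
    and a: "0 \<le> \<alpha>" "\<alpha> \<le> 1" and e: "0 < \<epsilon>" "real CARD('k) * \<epsilon> \<le> 1"
    and eta: "0 < \<eta>" and lam: "0 \<le> lam" and u: "u \<in> simplex_eps \<epsilon>"
  defines "c \<equiv> (\<Sum>j\<in>UNIV. u j * (\<integral>l. l \<partial>P j)) + \<eta> * real CARD('k) + lam * real CARD('k)
     + \<eta> * real CARD('k) * lam\<^sup>2 / \<epsilon>\<^sup>2"
  shows "(\<And>i. 0 < z i) \<Longrightarrow> exp_loss P \<alpha> \<eta> lam \<epsilon> n z \<le> ennreal (real n * c + bregman \<alpha> u (proj \<alpha> \<epsilon> z) / \<eta>)"
proof (induction n arbitrary: z)
  case 0
  then show ?case by simp
next
  case (Suc n)
  define K where "K = real CARD('k)"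
  define \<mu> where "\<mu> j = (\<integral>l. l \<partial>P j)" for j
  define x where "x = proj \<alpha> \<epsilon> z"
  define \<Phi> where "\<Phi> = bregman \<alpha> u x / \<eta>"
  define A where "A = real n * c + \<Phi> + lam * K + \<eta> * K * lam\<^sup>2 / \<epsilon>\<^sup>2"
  define B where "B j = (u j + \<eta>) / x j" for j
  have xs: "x \<in> simplex_eps \<epsilon>" unfolding x_def using proj_spec[OF e] by blast
  have xp: "0 < x i" for i using simplex_pos[OF xs e(1)] .
  have up: "0 < u i" for i using simplex_pos[OF u e(1)] .
  have mu: "0 \<le> \<mu> j" "\<mu> j \<le> 1" for j
    unfolding \<mu>_def using loss_facts[OF P_prob P_borel P_support] by auto
  have Phi0: "0 \<le> \<Phi>" unfolding \<Phi>_def bregman_sum using eta bd_nonneg[OF a up xp]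
    by (auto intro!: divide_nonneg_pos sum_nonneg)
  have s0: "0 \<le> (\<Sum>j\<in>UNIV. u j * \<mu> j)" proof (rule sum_nonneg)
    fix j show "0 \<le> u j * \<mu> j" using mu(1)[of j] up[of j] by simp
  qed
  have t0: "0 \<le> \<eta> * real CARD('k) * lam\<^sup>2 / \<epsilon>\<^sup>2" using eta by simp
  have t1: "0 \<le> \<eta> * real CARD('k)" "0 \<le> lam * real CARD('k)" using eta lam by simp_all
  have c0: "0 \<le> c" unfolding c_def \<mu>_def[symmetric] using s0 t0 t1 by linarith
  have A0: "0 \<le> A" unfolding A_def K_def using c0 Phi0 lam eta
    by (auto intro!: add_nonneg_nonneg mult_nonneg_nonneg divide_nonneg_pos)
  have B0: "0 \<le> B j" for j unfolding B_def using up[of j] xp[of j] eta by simp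
  have int_bound: "(\<integral>\<^sup>+ l. ennreal l + exp_loss P \<alpha> \<eta> lam \<epsilon> n (next_state \<alpha> \<eta> lam \<epsilon> z j l) \<partial>P j)
      \<le> ennreal (A + B j * \<mu> j)" for j
  proof -
    have "(\<integral>\<^sup>+ l. ennreal l + exp_loss P \<alpha> \<eta> lam \<epsilon> n (next_state \<alpha> \<eta> lam \<epsilon> z j l) \<partial>P j)
        \<le> (\<integral>\<^sup>+ l. ennreal (A + B j * l) \<partial>P j)"
    proof (rule nn_integral_mono_AE)
      show "AE l in P j. ennreal l + exp_loss P \<alpha> \<eta> lam \<epsilon> n (next_state \<alpha> \<eta> lam \<epsilon> z j l)
          \<le> ennreal (A + B j * l)"
        using P_support[of j]
      proof eventually_elim
        case (elim l)
        then have l: "0 \<le> l" "l \<le> 1" by auto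
        note st = step_ineq[where z=z and j=j and u=u and l=l, OF a e eta lam u Suc.prems l, folded x_def]
        define z' where "z' = next_state \<alpha> \<eta> lam \<epsilon> z j l"
        have z'p: "\<And>i. 0 < z' i" using st(1) unfolding z'_def pos_orthant_def by blast
        have Phi'0: "0 \<le> bregman \<alpha> u (proj \<alpha> \<epsilon> z') / \<eta>"
        proof -
          have "proj \<alpha> \<epsilon> z' \<in> simplex_eps \<epsilon>" using proj_spec[OF e] by blast
          then have "0 < proj \<alpha> \<epsilon> z' i" for i using simplex_pos e by blast
          then show ?thesis unfolding bregman_sum using eta bd_nonneg[OF a up]
            by (auto intro!: divide_nonneg_pos sum_nonneg)
        qed
        have IH: "exp_loss P \<alpha> \<eta> lam \<epsilon> n z' \<le> ennreal (real n * c + bregman \<alpha> u (proj \<alpha> \<epsilon> z') / \<eta>)"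
          using Suc.IH[OF z'p] .
        have "ennreal l + exp_loss P \<alpha> \<eta> lam \<epsilon> n z'
            \<le> ennreal l + ennreal (real n * c + bregman \<alpha> u (proj \<alpha> \<epsilon> z') / \<eta>)"
          using IH by (rule add_left_mono)
        also have "\<dots> = ennreal (l + (real n * c + bregman \<alpha> u (proj \<alpha> \<epsilon> z') / \<eta>))"
          using l Phi'0 c0 by (subst ennreal_plus) auto
        also have "\<dots> \<le> ennreal (A + B j * l)"
        proof (rule ennreal_leI)
          have "(u j + \<eta>) * l / x j = B j * l" unfolding B_def by simp
          then show "l + (real n * c + bregman \<alpha> u (proj \<alpha> \<epsilon> z') / \<eta>) \<le> A + B j * l"
            using st(2) unfolding A_def \<Phi>_def K_def z'_def by linarith
        qed
        finally show ?case unfolding z'_def .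
      qed
    qed
    also have "\<dots> = ennreal (A + B j * \<mu> j)"
      unfolding \<mu>_def using loss_facts(4)[OF P_prob P_borel P_support A0 B0] .
    finally show ?thesis .
  qed
  have "exp_loss P \<alpha> \<eta> lam \<epsilon> (Suc n) z \<le> (\<Sum>j\<in>UNIV. ennreal (x j) * ennreal (A + B j * \<mu> j))"
    unfolding exp_loss.simps x_def[symmetric]
    by (intro sum_mono mult_left_mono int_bound) auto
  also have "\<dots> = ennreal (\<Sum>j\<in>UNIV. x j * (A + B j * \<mu> j))"
  proof -
    have nn: "0 \<le> x j * (A + B j * \<mu> j)" for j using xp[of j] A0 B0[of j] mu(1)[of j] by simp
    have "(\<Sum>j\<in>UNIV. ennreal (x j) * ennreal (A + B j * \<mu> j)) = (\<Sum>j\<in>UNIV. ennreal (x j * (A + B j * \<mu> j)))"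
      by (rule sum.cong[OF refl], rule ennreal_mult'[symmetric]) (use xp in \<open>simp add: less_imp_le\<close>)
    also have "\<dots> = ennreal (\<Sum>j\<in>UNIV. x j * (A + B j * \<mu> j))" by (rule sum_ennreal) (rule nn)
    finally show ?thesis .
  qed
  also have "\<dots> \<le> ennreal (real (Suc n) * c + \<Phi>)"
  proof (rule ennreal_leI)
    have e1: "(\<Sum>j\<in>UNIV. x j * (A + B j * \<mu> j)) = A * (\<Sum>j\<in>UNIV. x j) + (\<Sum>j\<in>UNIV. u j * \<mu> j) + \<eta> * (\<Sum>j\<in>UNIV. \<mu> j)"
    proof -
      have "x j * (A + B j * \<mu> j) = A * x j + u j * \<mu> j + \<eta> * \<mu> j" for j
        unfolding B_def using xp[of j] by (simp add: field_simps)
      then show ?thesis by (simp add: sum.distrib sum_distrib_left)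
    qed
    have e2: "(\<Sum>j\<in>UNIV. x j) = 1" using xs unfolding simplex_eps_def by blast
    have "(\<Sum>j\<in>UNIV. \<mu> j) \<le> K" unfolding K_def
      using sum_mono[of UNIV \<mu> "\<lambda>_. 1"] mu by simp
    then have e3: "\<eta> * (\<Sum>j\<in>UNIV. \<mu> j) \<le> \<eta> * K" using eta by simp
    have ceq: "c = (\<Sum>j\<in>UNIV. u j * \<mu> j) + \<eta> * K + lam * K + \<eta> * K * lam\<^sup>2 / \<epsilon>\<^sup>2"
      unfolding c_def K_def \<mu>_def ..
    have sc: "real (Suc n) * c = real n * c + c" by (simp add: algebra_simps)
    show "(\<Sum>j\<in>UNIV. x j * (A + B j * \<mu> j)) \<le> real (Suc n) * c + \<Phi>"
    proof -
      have e1': "(\<Sum>j\<in>UNIV. x j * (A + B j * \<mu> j)) = A + (\<Sum>j\<in>UNIV. u j * \<mu> j) + \<eta> * (\<Sum>j\<in>UNIV. \<mu> j)"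
        using e1 e2 by simp
      have Aeq: "A = real n * c + \<Phi> + lam * K + \<eta> * K * lam\<^sup>2 / \<epsilon>\<^sup>2" by (simp add: A_def)
      show ?thesis using e1' Aeq ceq sc e3 by linarith
    qed
  qed
  finally show ?case unfolding \<Phi>_def x_def .
qed



definition Cal :: "real \<Rightarrow> real" where
  "Cal \<alpha> = (if \<alpha> = 0 then 0 else if \<alpha> = 1 then 1 else 1 / (\<alpha> * (1 - \<alpha>)))"

lemma ph_upper:
  assumes a: "0 \<le> \<alpha>" "\<alpha> \<le> 1" and t: "\<epsilon> \<le> t" "t \<le> 1" and e: "0 < \<epsilon>"
  shows "ph \<alpha> t \<le> Cal \<alpha> + (if \<alpha> = 0 then - ln \<epsilon> else 0)"
proof -
  have t0: "0 < t" using t e by simp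
  consider "\<alpha> = 0" | "\<alpha> = 1" | "0 < \<alpha> \<and> \<alpha> < 1" using a by linarith
  then show ?thesis
  proof cases
    case 1
    have "ln \<epsilon> \<le> ln t" using t e by simp
    then show ?thesis using 1 t unfolding ph_def Cal_def by simp
  next
    case 2
    have "ln t \<le> 0" using t t0 by simp
    then have "t * ln t \<le> 0" using t0 by (simp add: mult_nonneg_nonpos)
    moreover have "ph \<alpha> t = t * ln t - t + 1" using 2 by (simp add: ph_def)
    moreover have "Cal \<alpha> + (if \<alpha> = 0 then - ln \<epsilon> else 0) = 1" using 2 by (simp add: Cal_def)
    ultimately show ?thesis using t0 by linarith
  next
    case 3
    have c: "0 < \<alpha> * (1 - \<alpha>)" using 3 by simp
    have "\<alpha> * t + (1 - \<alpha>) - t powr \<alpha> \<le> 1" using t 3 t0 by (smt (verit) mult_left_le powr_ge_zero)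
    then have "- (t powr \<alpha> - \<alpha> * t - (1 - \<alpha>)) \<le> 1" by linarith
    then have "(- (t powr \<alpha> - \<alpha> * t - (1 - \<alpha>))) / (\<alpha> * (1 - \<alpha>)) \<le> 1 / (\<alpha> * (1 - \<alpha>))"
      using c by (intro divide_right_mono) auto
    then have "- ((t powr \<alpha> - \<alpha> * t - (1 - \<alpha>)) / (\<alpha> * (1 - \<alpha>))) \<le> 1 / (\<alpha> * (1 - \<alpha>))"
      by (simp only: minus_divide_left)
    then show ?thesis using 3 unfolding ph_def Cal_def by simp
  qed
qed



lemma main_T:
  fixes P :: "'k::finite \<Rightarrow> real measure" and T :: nat and g \<alpha> :: real
  assumes P_prob: "\<And>a. prob_space (P a)"
    and P_borel: "\<And>a. sets (P a) = sets borel"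
    and P_support: "\<And>a. AE l in P a. l \<in> {0..1}"
    and a: "0 \<le> \<alpha>" "\<alpha> \<le> 1"
    and g: "0 < g" "g \<le> (ln (real T))\<^sup>2"
    and L2: "2 \<le> ln (real T)"
    and eK: "real CARD('k) * (ln (real T) / sqrt (real T)) \<le> 1"
    and KM: "real CARD('k) + real CARD('k) * (Cal \<alpha> - ph \<alpha> (1 / real CARD('k))) \<le> real CARD('k) * ln (real T)"
  shows "exp_loss P \<alpha> (1 / sqrt (real T)) (g / sqrt (real CARD('k) * real T)) (ln (real T) / sqrt (real T)) T
           (\<lambda>_. 1 / real CARD('k))
    \<le> ennreal (real T * Min (range (\<lambda>a. \<integral>l. l \<partial>P a)) +
          (if \<alpha> < 1/3
              then (4 * sqrt (real CARD('k)) * ln (real T) + g * ln (real T)) * sqrt (real CARD('k) * real T)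
              else (4 * sqrt (real CARD('k)) * ln (real CARD('k)) + 2 * sqrt (real CARD('k)) * ln (real T) + g * ln (real T))
                     * sqrt (real CARD('k) * real T)))"
proof -
  define K where "K = real CARD('k)"
  define L where "L = ln (real T)"
  define s where "s = sqrt (real T)"
  define q where "q = sqrt K"
  define \<eta> where "\<eta> = 1 / s"
  define \<epsilon> where "\<epsilon> = L / s"
  define lam where "lam = g / sqrt (K * real T)"
  define \<mu> where "\<mu> a = (\<integral>l. l \<partial>P a)" for a
  define \<mu>s where "\<mu>s = Min (range \<mu>)"
  define M where "M = K * (Cal \<alpha> - ph \<alpha> (1 / K))"
  have K1: "1 \<le> K" unfolding K_def by simp
  have K0: "0 < K" using K1 by simp
  have q1: "1 \<le> q" unfolding q_def using K1 by simp
  have qq: "q * q = K" unfolding q_def using K0 by simp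
  have T0: "0 < real T" using L2 by (cases T) auto
  have s0: "0 < s" unfolding s_def using T0 by simp
  have ss: "s * s = real T" unfolding s_def using T0 by simp
  have L0: "0 < L" using L2 unfolding L_def by simp
  have e0: "0 < \<epsilon>" unfolding \<epsilon>_def using L0 s0 by simp
  have eK': "K * \<epsilon> \<le> 1" using eK unfolding K_def \<epsilon>_def L_def s_def .
  have eta0: "0 < \<eta>" unfolding \<eta>_def using s0 by simp
  have sqKT: "sqrt (K * real T) = q * s" unfolding q_def s_def by (simp add: real_sqrt_mult)
  have lam_eq: "lam = g / (q * s)" unfolding lam_def sqKT ..
  have lam0: "0 \<le> lam" unfolding lam_eq using g s0 q1 by simp
  have mu: "0 \<le> \<mu> j" "\<mu> j \<le> 1" for j
    unfolding \<mu>_def using loss_facts[OF P_prob P_borel P_support] by auto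
  have "Min (range \<mu>) \<in> range \<mu>" by (rule Min_in) auto
  then obtain i0 where i0: "\<mu> i0 = \<mu>s" unfolding \<mu>s_def by (metis rangeE)
  have mus_le: "\<mu>s \<le> \<mu> j" for j unfolding \<mu>s_def by simp
  have mus0: "0 \<le> \<mu>s" using i0 mu by metis
  define u where "u i = \<epsilon> + (if i = i0 then 1 - K * \<epsilon> else 0)" for i
  have u_ge: "\<epsilon> \<le> u i" for i unfolding u_def using eK' by auto
  have u_sum: "(\<Sum>i\<in>UNIV. u i) = 1" unfolding u_def by (simp add: sum.distrib K_def)
  have u: "u \<in> simplex_eps \<epsilon>" unfolding simplex_eps_def using u_ge u_sum by blast
  have u1: "u i \<le> 1" for i using simplex_le1[OF u e0] .
  define c where "c = (\<Sum>j\<in>UNIV. u j * \<mu> j) + \<eta> * K + lam * K + \<eta> * K * lam\<^sup>2 / \<epsilon>\<^sup>2"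
  define unif where "unif = (\<lambda>_::'k. 1 / K)"
  have unifp: "\<And>i. 0 < unif i" unfolding unif_def using K0 by simp
  have eKk: "real CARD('k) * \<epsilon> \<le> 1" using eK' unfolding K_def .
  have bound1: "exp_loss P \<alpha> \<eta> lam \<epsilon> T unif \<le> ennreal (real T * c + bregman \<alpha> u (proj \<alpha> \<epsilon> unif) / \<eta>)"
    using exp_loss_bound[OF P_prob P_borel P_support a e0 eKk eta0 lam0 u, where z=unif and n=T] unifp
    unfolding c_def K_def \<mu>_def by simp
  have pyth1: "bregman \<alpha> u (proj \<alpha> \<epsilon> unif) \<le> bregman \<alpha> u unif" using pyth[OF a e0 eKk u unifp] .
  have D_eq: "bregman \<alpha> u unif = (\<Sum>i\<in>UNIV. ph \<alpha> (u i)) - K * ph \<alpha> (1 / K)"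
  proof -
    have "bregman \<alpha> u unif = (\<Sum>i\<in>UNIV. ph \<alpha> (u i)) - (\<Sum>i\<in>(UNIV::'k set). ph \<alpha> (1 / K))
         - (\<Sum>i\<in>UNIV. dph \<alpha> (1 / K) * (u i - 1 / K))"
      unfolding bregman_sum bd_def unif_def by (simp only: sum_subtractf)
    moreover have "(\<Sum>i\<in>(UNIV::'k set). ph \<alpha> (1 / K)) = K * ph \<alpha> (1 / K)" by (simp add: K_def)
    moreover have "(\<Sum>i\<in>UNIV. u i - 1 / K) = 0" using u_sum K0 by (simp add: sum_subtractf K_def)
    then have "(\<Sum>i\<in>UNIV. dph \<alpha> (1 / K) * (u i - 1 / K)) = 0" by (simp add: sum_distrib_left[symmetric])
    ultimately show ?thesis by simp
  qed
  have lneps: "- ln \<epsilon> \<le> L / 2"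
  proof -
    have "- ln \<epsilon> = ln s - ln L" unfolding \<epsilon>_def using L0 s0 by (simp add: ln_div)
    moreover have "ln s = L / 2" unfolding s_def L_def using T0 by (simp add: ln_sqrt)
    moreover have "0 \<le> ln L" using L2 unfolding L_def by simp
    ultimately show ?thesis by linarith
  qed
  have D_le: "bregman \<alpha> u unif \<le> M + (if \<alpha> = 0 then K * L / 2 else 0)"
  proof -
    have "(\<Sum>i\<in>UNIV. ph \<alpha> (u i)) \<le> (\<Sum>i\<in>(UNIV::'k set). Cal \<alpha> + (if \<alpha> = 0 then - ln \<epsilon> else 0))"
      by (rule sum_mono) (rule ph_upper[OF a u_ge u1 e0])
    also have "\<dots> = K * (Cal \<alpha> + (if \<alpha> = 0 then - ln \<epsilon> else 0))" by (simp add: K_def)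
    also have "\<dots> \<le> K * (Cal \<alpha> + (if \<alpha> = 0 then L / 2 else 0))"
      using lneps K0 by (intro mult_left_mono) auto
    finally show ?thesis unfolding D_eq M_def using K0 by (auto simp: algebra_simps)
  qed
  have S_le: "(\<Sum>j\<in>UNIV. u j * \<mu> j) \<le> \<mu>s + K * \<epsilon>"
  proof -
    have "(\<Sum>j\<in>UNIV. u j * \<mu> j) = \<epsilon> * (\<Sum>j\<in>UNIV. \<mu> j) + (1 - K * \<epsilon>) * \<mu>s"
      unfolding u_def using i0 by (simp add: distrib_right sum.distrib sum_distrib_left if_distrib[of "\<lambda>v. v * _"] cong: if_cong)
    moreover have "(\<Sum>j\<in>UNIV. \<mu> j) \<le> K" unfolding K_def using sum_mono[of UNIV \<mu> "\<lambda>_. 1"] mu by simp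
    then have "\<epsilon> * (\<Sum>j\<in>UNIV. \<mu> j) \<le> \<epsilon> * K" using e0 by simp
    moreover have "(1 - K * \<epsilon>) * \<mu>s \<le> \<mu>s" using mus0 e0 K0 by (simp add: algebra_simps)
    ultimately show ?thesis by (simp add: algebra_simps)
  qed
  define R where "R = real T"
  have R_eq: "R = s * s" unfolding R_def using ss by simp
  have K_eq: "K = q * q" using qq by simp
  define X1 where "X1 = K * L * s"
  define X2 where "X2 = K * s"
  define X3 where "X3 = g * q * s"
  define X4 where "X4 = s * g"
  define X5 where "X5 = s * M"
  define X6 where "X6 = g * L * q * s"
  define X7 where "X7 = K * ln K * s"
  have X1_0: "0 \<le> X1" unfolding X1_def using K0 L0 s0 by simp
  have X7_0: "0 \<le> X7" unfolding X7_def using K1 s0 by simp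
  have h1a: "R * (\<Sum>j\<in>UNIV. u j * \<mu> j) \<le> R * \<mu>s + X1"
  proof -
    have "R * (\<Sum>j\<in>UNIV. u j * \<mu> j) \<le> R * (\<mu>s + K * \<epsilon>)" using S_le T0 unfolding R_def by simp
    also have "R * (\<mu>s + K * \<epsilon>) = R * \<mu>s + X1" unfolding X1_def \<epsilon>_def R_eq using s0
      by (simp add: field_simps)
    finally show ?thesis .
  qed
  have h1b: "R * (\<eta> * K) = X2" unfolding X2_def \<eta>_def R_eq using s0 by (simp add: field_simps)
  have h1c: "R * (lam * K) = X3" unfolding X3_def lam_eq R_eq K_eq using s0 q1 by (simp add: field_simps)
  have h1d: "R * (\<eta> * K * lam\<^sup>2 / \<epsilon>\<^sup>2) \<le> X4"
  proof -
    have "R * (\<eta> * K * lam\<^sup>2 / \<epsilon>\<^sup>2) = s * (g * g / (L * L))"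
      unfolding lam_eq \<eta>_def \<epsilon>_def R_eq K_eq using s0 q1 L0 by (simp add: field_simps power2_eq_square)
    also have "g * g / (L * L) \<le> g"
    proof -
      have "g * g \<le> g * (L * L)" using g unfolding L_def by (intro mult_left_mono) (auto simp: power2_eq_square)
      then show ?thesis using L0 by (simp add: divide_le_eq)
    qed
    then have "s * (g * g / (L * L)) \<le> s * g" using s0 by (intro mult_left_mono) auto
    finally show ?thesis unfolding X4_def .
  qed
  have h1: "R * c \<le> R * \<mu>s + X1 + X2 + X3 + X4"
  proof -
    have "R * c = R * (\<Sum>j\<in>UNIV. u j * \<mu> j) + R * (\<eta> * K) + R * (lam * K) + R * (\<eta> * K * lam\<^sup>2 / \<epsilon>\<^sup>2)"
      unfolding c_def by (simp add: algebra_simps)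
    then show ?thesis using h1a h1b h1c h1d by linarith
  qed
  have h2: "bregman \<alpha> u unif / \<eta> \<le> X5 + (if \<alpha> = 0 then X1 / 2 else 0)"
  proof -
    have "bregman \<alpha> u unif / \<eta> = s * bregman \<alpha> u unif" unfolding \<eta>_def using s0 by simp
    also have "\<dots> \<le> s * (M + (if \<alpha> = 0 then K * L / 2 else 0))" using D_le s0 by simp
    also have "\<dots> = X5 + (if \<alpha> = 0 then X1 / 2 else 0)" unfolding X5_def X1_def by (simp add: algebra_simps)
    finally show ?thesis .
  qed
  have h3: "X2 + X5 \<le> X1"
  proof -
    have "K + M \<le> K * L" using KM unfolding M_def K_def L_def .
    then have "s * (K + M) \<le> s * (K * L)" using s0 by simp
    then show ?thesis unfolding X1_def X2_def X5_def by (simp add: algebra_simps)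
  qed
  have h4: "X4 \<le> X3" unfolding X3_def X4_def using g s0 q1 by (simp add: mult_le_cancel_left1 mult.commute mult.left_commute)
  have h5: "2 * X3 \<le> X6"
  proof -
    have "g * q * s * 2 \<le> g * q * s * L" using L2 g q1 s0 unfolding L_def by (intro mult_left_mono) auto
    then show ?thesis unfolding X3_def X6_def by (simp add: algebra_simps)
  qed
  define Bv where "Bv = (if \<alpha> < 1/3
              then (4 * sqrt K * L + g * L) * sqrt (K * real T)
              else (4 * sqrt K * ln K + 2 * sqrt K * L + g * L) * sqrt (K * real T))"
  have Bv1: "\<alpha> < 1/3 \<Longrightarrow> Bv = 4 * X1 + X6"
    unfolding Bv_def X1_def X6_def sqKT q_def[symmetric] using qq by (simp add: algebra_simps)
  have qq2: "\<And>x. q * (q * x) = K * x" using qq by (metis mult.assoc)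
  have Bv2: "\<not> \<alpha> < 1/3 \<Longrightarrow> Bv = 4 * X7 + 2 * X1 + X6"
    unfolding Bv_def X1_def X6_def X7_def sqKT q_def[symmetric] using qq by (simp add: algebra_simps qq2)
  have key: "R * c + bregman \<alpha> u unif / \<eta> \<le> R * \<mu>s + Bv"
  proof (cases "\<alpha> < 1/3")
    case True
    have "(if \<alpha> = 0 then X1 / 2 else 0) \<le> X1 / 2" using X1_0 by simp
    then show ?thesis using h1 h2 h3 h4 h5 Bv1[OF True] X1_0 by linarith
  next
    case False
    then have "\<alpha> \<noteq> 0" by auto
    then show ?thesis using h1 h2 h3 h4 h5 Bv2[OF False] X1_0 X7_0 by simp
  qed
  have "exp_loss P \<alpha> \<eta> lam \<epsilon> T unif \<le> ennreal (real T * \<mu>s + Bv)"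
  proof -
    have "real T * c + bregman \<alpha> u (proj \<alpha> \<epsilon> unif) / \<eta> \<le> real T * \<mu>s + Bv"
      using key pyth1 eta0 unfolding R_def by (smt (verit) divide_right_mono)
    then show ?thesis using bound1 by (meson ennreal_leI order_trans)
  qed
  then show ?thesis unfolding \<eta>_def \<epsilon>_def lam_def unif_def \<mu>s_def \<mu>_def Bv_def s_def L_def K_def .
qed



theorem theorem2:
  fixes P :: "'k::finite \<Rightarrow> real measure"
    and \<alpha> :: real
    and \<gamma> :: "nat \<Rightarrow> real"
  assumes P_prob: "\<And>a. prob_space (P a)"
    and P_borel: "\<And>a. sets (P a) = sets borel"
    and P_support: "\<And>a. AE l in P a. l \<in> {0..1}"
    and alpha: "0 \<le> \<alpha>" "\<alpha> \<le> 1"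
    and gamma_pos: "\<And>T. T \<ge> 2 \<Longrightarrow> 0 < \<gamma> T"
    and gamma_le: "\<And>T. T \<ge> 2 \<Longrightarrow> \<gamma> T \<le> (ln (real T))\<^sup>2"
    and gamma_lim: "(\<lambda>T. \<gamma> T / (ln (real T))\<^sup>2) \<longlonglongrightarrow> 0"
    and gamma_lim2: "\<alpha> < 1/3 \<Longrightarrow> (\<lambda>T. ln (real T) / \<gamma> T) \<longlonglongrightarrow> 0"
  shows "\<exists>T0. \<forall>T\<ge>T0.
    (let K = real CARD('k);
         \<mu> = (\<lambda>a. \<integral>l. l \<partial>P a);
         \<mu>star = Min (range \<mu>);
         \<eta> = 1 / sqrt (real T);
         \<epsilon> = ln (real T) / sqrt (real T);
         lam = \<gamma> T / sqrt (K * real T);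
         B = (if \<alpha> < 1/3
              then (4 * sqrt K * ln (real T) + \<gamma> T * ln (real T)) * sqrt (K * real T)
              else (4 * sqrt K * ln K + 2 * sqrt K * ln (real T) + \<gamma> T * ln (real T))
                     * sqrt (K * real T))
     in exp3_expected_loss P \<alpha> T \<eta> lam \<epsilon> \<le> ennreal (real T * \<mu>star + B))"
proof -
  define K where "K = real CARD('k)"
  define M where "M = K * (Cal \<alpha> - ph \<alpha> (1 / K))"
  have K0: "0 < K" unfolding K_def by simp
  have lnT: "filterlim (\<lambda>T. ln (real T)) at_top sequentially"
    by (rule filterlim_compose[OF ln_at_top filterlim_real_sequentially])
  have lim0': "((\<lambda>x::real. ln x / sqrt x) \<longlongrightarrow> 0) at_top" by real_asymp
  have lim0: "(\<lambda>T. ln (real T) / sqrt (real T)) \<longlonglongrightarrow> 0"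
    by (rule filterlim_compose[OF lim0' filterlim_real_sequentially])
  have ev1: "eventually (\<lambda>T. max 2 ((K + M) / K) \<le> ln (real T)) sequentially"
    using lnT unfolding filterlim_at_top by blast
  have ev2: "eventually (\<lambda>T. ln (real T) / sqrt (real T) < 1 / K) sequentially"
    using order_tendstoD(2)[OF lim0] K0 by simp
  have ev3: "eventually (\<lambda>T. 2 \<le> T) sequentially" by (rule eventually_ge_at_top)
  have "eventually (\<lambda>T. max 2 ((K + M) / K) \<le> ln (real T) \<and> ln (real T) / sqrt (real T) < 1 / K \<and> 2 \<le> T) sequentially"
    by (intro eventually_conj ev1 ev2 ev3)
  then obtain N where N: "\<And>T. N \<le> T \<Longrightarrow> max 2 ((K + M) / K) \<le> ln (real T) \<and> ln (real T) / sqrt (real T) < 1 / K \<and> 2 \<le> T"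
    unfolding eventually_sequentially by blast
  show ?thesis
  proof (intro exI allI impI)
    fix T assume T: "N \<le> T"
    note NT = N[OF T]
    have L2: "2 \<le> ln (real T)" using NT by simp
    have eK: "real CARD('k) * (ln (real T) / sqrt (real T)) \<le> 1"
    proof -
      have "K * (ln (real T) / sqrt (real T)) < K * (1 / K)" using NT K0 by (intro mult_strict_left_mono) auto
      then show ?thesis using K0 unfolding K_def by simp
    qed
    have KM: "real CARD('k) + real CARD('k) * (Cal \<alpha> - ph \<alpha> (1 / real CARD('k))) \<le> real CARD('k) * ln (real T)"
    proof -
      have "(K + M) / K \<le> ln (real T)" using NT by simp
      then have "K + M \<le> K * ln (real T)" using K0 by (simp add: divide_le_eq mult.commute)
      then show ?thesis unfolding M_def K_def .
    qed
    have g: "0 < \<gamma> T" "\<gamma> T \<le> (ln (real T))\<^sup>2" using gamma_pos gamma_le NT by auto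
    show "let K = real CARD('k);
         \<mu> = (\<lambda>a. \<integral>l. l \<partial>P a);
         \<mu>star = Min (range \<mu>);
         \<eta> = 1 / sqrt (real T);
         \<epsilon> = ln (real T) / sqrt (real T);
         lam = \<gamma> T / sqrt (K * real T);
         B = (if \<alpha> < 1/3
              then (4 * sqrt K * ln (real T) + \<gamma> T * ln (real T)) * sqrt (K * real T)
              else (4 * sqrt K * ln K + 2 * sqrt K * ln (real T) + \<gamma> T * ln (real T))
                     * sqrt (K * real T))
     in exp3_expected_loss P \<alpha> T \<eta> lam \<epsilon> \<le> ennreal (real T * \<mu>star + B)"
      unfolding Let_def exp3_expected_loss_def
      using main_T[OF P_prob P_borel P_support alpha g L2 eK KM] .
  qed
qed


end
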